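(* Let $\mathcal{H}$ be a right quaternionic Hilbert space and $x_1,\dots,x_n\in\mathcal{H}$ unit vectors. Then for each $m\in\mathbb{N}$ there exist unit vectors $x_{1,m},\dots,x_{n,m}\in\mathbb{H}^n$ such that $\langle x_{i,m},x_{j,m}\rangle=\langle x_i,x_j\rangle\,|\langle x_i,x_j\rangle|^{2m}$ for all $i,j$.
   Context: A right quaternionic Hilbert space is a right $\mathbb{H}$-vector space with inner product satisfying $\langle y,x\rangle=\overline{\langle x,y\rangle}$, $\langle xa+yb,z\rangle=\bar a\langle x,z\rangle+\bar b\langle y,z\rangle$, $\langle z,xa+yb\rangle=\langle z,x\rangle a+\langle z,y\rangle b$, $\langle x,x\rangle>0$ for $x\ne0$. $\mathbb{H}^n$ carries $\langle x,y\rangle=\sum_k\bar x_ky_k$. *)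

theory Defs
  imports "HOL-Analysis.Analysis"
begin

datatype quat = Quat (Re: real) (Im1: real) (Im2: real) (Im3: real)

lemma quat_eq_iff: "x = y \<longleftrightarrow> Re x = Re y \<and> Im1 x = Im1 y \<and> Im2 x = Im2 y \<and> Im3 x = Im3 y"
  by (cases x; cases y) auto

instantiation quat :: ring_1
begin
definition "0 = Quat 0 0 0 0"
definition "1 = Quat 1 0 0 0"
definition "x + y = Quat (Re x + Re y) (Im1 x + Im1 y) (Im2 x + Im2 y) (Im3 x + Im3 y)"
definition "x - y = Quat (Re x - Re y) (Im1 x - Im1 y) (Im2 x - Im2 y) (Im3 x - Im3 y)"
definition "- x = Quat (- Re x) (- Im1 x) (- Im2 x) (- Im3 x)"
definition "x * y = Quat
   (Re x * Re y - Im1 x * Im1 y - Im2 x * Im2 y - Im3 x * Im3 y)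
   (Re x * Im1 y + Im1 x * Re y + Im2 x * Im3 y - Im3 x * Im2 y)
   (Re x * Im2 y - Im1 x * Im3 y + Im2 x * Re y + Im3 x * Im1 y)
   (Re x * Im3 y + Im1 x * Im2 y - Im2 x * Im1 y + Im3 x * Re y)"
instance
  by standard (auto simp: quat_eq_iff zero_quat_def one_quat_def plus_quat_def
      minus_quat_def uminus_quat_def times_quat_def algebra_simps)
end

definition qcnj :: "quat \<Rightarrow> quat" where
  "qcnj x = Quat (Re x) (- Im1 x) (- Im2 x) (- Im3 x)"

definition qabs :: "quat \<Rightarrow> real" where
  "qabs x = sqrt ((Re x)\<^sup>2 + (Im1 x)\<^sup>2 + (Im2 x)\<^sup>2 + (Im3 x)\<^sup>2)"

definition quat_of_real :: "real \<Rightarrow> quat" where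
  "quat_of_real r = Quat r 0 0 0"

definition qhs_norm :: "('v \<Rightarrow> 'v \<Rightarrow> quat) \<Rightarrow> 'v \<Rightarrow> real" where
  "qhs_norm ip x = sqrt (Re (ip x x))"

definition right_quat_hilbert_space ::
  "('v::ab_group_add \<Rightarrow> quat \<Rightarrow> 'v) \<Rightarrow> ('v \<Rightarrow> 'v \<Rightarrow> quat) \<Rightarrow> bool" where
  "right_quat_hilbert_space smul ip \<longleftrightarrow>
     \<comment> \<open>right H-vector space\<close>
     (\<forall>x a b. smul (smul x a) b = smul x (a * b)) \<and>
     (\<forall>x. smul x 1 = x) \<and>
     (\<forall>x y a. smul (x + y) a = smul x a + smul y a) \<and>
     (\<forall>x a b. smul x (a + b) = smul x a + smul x b) \<and>
     \<comment> \<open>inner product axioms\<close>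
     (\<forall>x y. ip y x = qcnj (ip x y)) \<and>
     (\<forall>x y z a b. ip (smul x a + smul y b) z = qcnj a * ip x z + qcnj b * ip y z) \<and>
     (\<forall>x y z a b. ip z (smul x a + smul y b) = ip z x * a + ip z y * b) \<and>
     (\<forall>x. x \<noteq> 0 \<longrightarrow> Im1 (ip x x) = 0 \<and> Im2 (ip x x) = 0 \<and> Im3 (ip x x) = 0 \<and> Re (ip x x) > 0) \<and>
     \<comment> \<open>completeness w.r.t. the norm induced by the inner product\<close>
     (\<forall>s :: nat \<Rightarrow> 'v.
        (\<forall>e>0. \<exists>N. \<forall>p\<ge>N. \<forall>q\<ge>N. qhs_norm ip (s p - s q) < e) \<longrightarrow>
        (\<exists>l. \<forall>e>0. \<exists>N. \<forall>p\<ge>N. qhs_norm ip (s p - l) < e))"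

text \<open>The standard inner product on H^n; vectors of H^n are represented as functions
  nat => quat of which only the coordinates 0..n-1 are used.\<close>
definition qinner_n :: "nat \<Rightarrow> (nat \<Rightarrow> quat) \<Rightarrow> (nat \<Rightarrow> quat) \<Rightarrow> quat" where
  "qinner_n n x y = (\<Sum>k<n. qcnj (x k) * y k)"

end

theory Submission
  imports Defs "HOL-Library.Countable"
begin

lemmas qdefs = zero_quat_def one_quat_def plus_quat_def minus_quat_def uminus_quat_def
  times_quat_def qcnj_def quat_of_real_def

lemma Re_add[simp]: "Re (a + b) = Re a + Re b" and Re_zero[simp]: "Re 0 = 0"
  and Re_one[simp]: "Re 1 = 1" and Re_uminus[simp]: "Re (- a) = - Re a"
  and Re_minus[simp]: "Re (a - b) = Re a - Re b"
  by (simp_all add: qdefs)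

lemma qcnj_mult: "qcnj (a*b) = qcnj b * qcnj a"
  by (simp add: quat_eq_iff qdefs algebra_simps)
lemma qcnj_add[simp]: "qcnj (a+b) = qcnj a + qcnj b"
  by (simp add: quat_eq_iff qdefs algebra_simps)
lemma qcnj_diff[simp]: "qcnj (a-b) = qcnj a - qcnj b"
  by (simp add: quat_eq_iff qdefs algebra_simps)
lemma qcnj_uminus[simp]: "qcnj (-a) = - qcnj a"
  by (simp add: quat_eq_iff qdefs algebra_simps)
lemma qcnj_zero[simp]: "qcnj 0 = 0"
  by (simp add: quat_eq_iff qdefs algebra_simps)
lemma qcnj_one[simp]: "qcnj 1 = 1"
  by (simp add: quat_eq_iff qdefs algebra_simps)
lemma qcnj_qcnj[simp]: "qcnj (qcnj a) = a"
  by (simp add: quat_eq_iff qdefs algebra_simps)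
lemma qcnj_real[simp]: "qcnj (quat_of_real r) = quat_of_real r"
  by (simp add: quat_eq_iff qdefs algebra_simps)
lemma Re_qcnj[simp]: "Re (qcnj a) = Re a"
  by (simp add: qdefs)
lemma qr_commute: "quat_of_real r * q = q * quat_of_real r"
  by (simp add: quat_eq_iff qdefs algebra_simps)
lemma qr_mult: "quat_of_real a * quat_of_real b = quat_of_real (a*b)"
  by (simp add: quat_eq_iff qdefs algebra_simps)
lemma qr_add: "quat_of_real a + quat_of_real b = quat_of_real (a+b)"
  by (simp add: quat_eq_iff qdefs algebra_simps)
lemma qr_uminus: "- quat_of_real a = quat_of_real (-a)"
  by (simp add: quat_eq_iff qdefs algebra_simps)
lemma qr_0[simp]: "quat_of_real 0 = 0"
  by (simp add: quat_eq_iff qdefs algebra_simps)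
lemma qr_1[simp]: "quat_of_real 1 = 1"
  by (simp add: quat_eq_iff qdefs algebra_simps)
lemma Re_qr[simp]: "Re (quat_of_real r) = r"
  by (simp add: qdefs)
lemma Re_mult_real: "Re (quat_of_real r * q) = r * Re q"
  by (simp add: qdefs)
lemma Re_mult_comm: "Re (a*b) = Re (b*a)"
  by (simp add: qdefs algebra_simps)
lemma cnj_self: "qcnj a * a = quat_of_real ((Re a)^2 + (Im1 a)^2 + (Im2 a)^2 + (Im3 a)^2)"
  by (simp add: quat_eq_iff qdefs algebra_simps power2_eq_square)
lemma self_cnj: "a * qcnj a = quat_of_real ((Re a)^2 + (Im1 a)^2 + (Im2 a)^2 + (Im3 a)^2)"
  by (simp add: quat_eq_iff qdefs algebra_simps power2_eq_square)
lemma Re_cnj_self_nonneg: "0 \<le> Re (qcnj a * a)"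
  by (simp add: cnj_self)
lemma Re_cnj_self_zero: "Re (qcnj a * a) = 0 \<Longrightarrow> a = 0"
  by (simp add: cnj_self quat_eq_iff qdefs add_nonneg_eq_0_iff)
lemma Re_sum: "Re (sum f S) = (\<Sum>x\<in>S. Re (f x))"
  by (induction S rule: infinite_finite_induct) auto
lemma qcnj_sum: "qcnj (sum f S) = (\<Sum>x\<in>S. qcnj (f x))"
  by (induction S rule: infinite_finite_induct) auto
lemma qr_sum: "quat_of_real (sum f S) = (\<Sum>x\<in>S. quat_of_real (f x))"
  by (induction S rule: infinite_finite_induct) (auto simp: qr_add[symmetric])
lemma herm_real: "K = qcnj K \<Longrightarrow> K = quat_of_real (Re K)"
  by (cases K) (simp add: qdefs)
lemma Re_real_cnj: "Re (a * qcnj b) = Re a * Re b + Im1 a * Im1 b + Im2 a * Im2 b + Im3 a * Im3 b"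
  by (simp add: qdefs)

definition herm :: "nat \<Rightarrow> (nat \<Rightarrow> nat \<Rightarrow> quat) \<Rightarrow> bool" where
  "herm n K \<longleftrightarrow> (\<forall>i<n. \<forall>j<n. K j i = qcnj (K i j))"
definition qform :: "nat \<Rightarrow> (nat \<Rightarrow> nat \<Rightarrow> quat) \<Rightarrow> (nat \<Rightarrow> quat) \<Rightarrow> quat" where
  "qform n K q = (\<Sum>i<n. \<Sum>j<n. qcnj (q i) * K i j * q j)"
definition psd :: "nat \<Rightarrow> (nat \<Rightarrow> nat \<Rightarrow> quat) \<Rightarrow> bool" where
  "psd n K \<longleftrightarrow> (\<forall>q. 0 \<le> Re (qform n K q))"

lemma qform_split:
  "qform (Suc n) K (q(n:=p)) = qform n K q + (\<Sum>i<n. qcnj (q i) * K i n) * p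
     + qcnj p * (\<Sum>j<n. K n j * q j) + qcnj p * K n n * p"
proof -
  have a: "(\<Sum>i<n. \<Sum>j<Suc n. qcnj ((q(n:=p)) i) * K i j * (q(n:=p)) j)
     = (\<Sum>i<n. (\<Sum>j<n. qcnj (q i) * K i j * q j) + qcnj (q i) * K i n * p)"
    by (rule sum.cong) (auto intro!: sum.cong)
  have b: "(\<Sum>j<Suc n. qcnj ((q(n:=p)) n) * K n j * (q(n:=p)) j)
     = (\<Sum>j<n. qcnj p * K n j * q j) + qcnj p * K n n * p"
    unfolding sum.lessThan_Suc by (auto intro!: sum.cong)
  show ?thesis
    unfolding qform_def sum.lessThan_Suc[of _ n] a b
    by (simp add: sum.distrib sum_distrib_left sum_distrib_right mult.assoc algebra_simps)
qed

lemma psd_restrict: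
  assumes "psd (Suc n) K" and "\<And>q. \<exists>p. Re (qform n K' q) = Re (qform (Suc n) K (q(n:=p)))"
  shows "psd n K'"
  unfolding psd_def
proof
  fix q
  obtain p where "Re (qform n K' q) = Re (qform (Suc n) K (q(n:=p)))" using assms(2) by blast
  then show "0 \<le> Re (qform n K' q)" using assms(1) unfolding psd_def by simp
qed

lemma herm_restrict: "herm (Suc n) K \<Longrightarrow> herm n K"
  unfolding herm_def by (meson less_SucI)

lemma qform_two:
  assumes "j < n"
  shows "qform (Suc n) K (\<lambda>i. if i = j then c else if i = n then p else 0)
    = qcnj c * K j j * c + qcnj c * K j n * p + qcnj p * K n j * c + qcnj p * K n n * p"
proof -
  let ?q = "\<lambda>i. if i = j then c else if i = n then p else 0"
  have d: "(\<Sum>i<Suc n. g i (?q i)) = g j c + g n p" if "\<And>i. g i 0 = 0" for g :: "nat \<Rightarrow> quat \<Rightarrow> quat"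
  proof -
    have "(\<Sum>i<Suc n. g i (?q i)) = (\<Sum>i<Suc n. (if i = j then g j c else 0) + (if i = n then g n p else 0))"
      using assms that by (intro sum.cong) auto
    also have "\<dots> = g j c + g n p" using assms by (simp add: sum.distrib)
    finally show ?thesis .
  qed
  have "qform (Suc n) K ?q = (\<Sum>i<Suc n. qcnj (?q i) * (\<Sum>j<Suc n. K i j * ?q j))"
    unfolding qform_def by (simp only: sum_distrib_left mult.assoc)
  also have "\<dots> = (\<Sum>i<Suc n. qcnj (?q i) * (K i j * c + K i n * p))"
  proof (rule sum.cong[OF refl])
    fix i show "qcnj (?q i) * (\<Sum>j<Suc n. K i j * ?q j) = qcnj (?q i) * (K i j * c + K i n * p)"
      using d[of "\<lambda>j x. K i j * x"] by simp
  qed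
  also have "\<dots> = qcnj c * (K j j * c + K j n * p) + qcnj p * (K n j * c + K n n * p)"
    using d[of "\<lambda>i x. qcnj x * (K i j * c + K i n * p)"] by simp
  finally show ?thesis by (simp add: distrib_left mult.assoc)
qed

lemma psd_diag:
  assumes "psd (Suc n) K" "herm (Suc n) K"
  shows "K n n = quat_of_real (Re (K n n))" "0 \<le> Re (K n n)"
proof -
  have "K n n = qcnj (K n n)" using assms(2) unfolding herm_def by blast
  then show "K n n = quat_of_real (Re (K n n))" by (rule herm_real)
  have "qform (Suc n) K ((\<lambda>i. 0)(n:=1)) = K n n"
    by (subst qform_split) (simp add: qform_def)
  then show "0 \<le> Re (K n n)" using assms(1) unfolding psd_def by metis
qed

lemma psd_zero_row:
  assumes "psd (Suc n) K" "herm (Suc n) K" "K n n = 0" "j < n"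
  shows "K n j = 0"
proof (rule ccontr)
  assume ne: "K n j \<noteq> 0"
  define N where "N = Re (qcnj (K n j) * K n j)"
  have N: "N > 0" using Re_cnj_self_nonneg[of "K n j"] Re_cnj_self_zero[of "K n j"] ne
    unfolding N_def by fastforce
  define d where "d = Re (K j j)"
  have d: "0 \<le> d" proof -
    have "qform (Suc n) K ((\<lambda>i. 0)(j:=1)) = qform (Suc n) K (\<lambda>i. if i = j then 1 else if i = n then 0 else 0)"
      by (rule arg_cong[where f="qform _ _"]) auto
    also have "\<dots> = K j j" using assms(4) by (subst qform_two) auto
    finally show ?thesis using assms(1) unfolding psd_def d_def by metis
  qed
  define t where "t = (d + 1) / N"
  have hj: "K j n = qcnj (K n j)" using assms(2,4) unfolding herm_def by (meson less_SucI lessI)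
  have "qform (Suc n) K (\<lambda>i. if i = j then 1 else if i = n then - quat_of_real t * K n j else 0)
     = K j j - quat_of_real t * (qcnj (K n j) * K n j) - quat_of_real t * (qcnj (K n j) * K n j)"
    using assms(3,4) hj by (subst qform_two) (auto simp: qcnj_mult algebra_simps qr_commute mult.assoc)
  hence "Re (qform (Suc n) K (\<lambda>i. if i = j then 1 else if i = n then - quat_of_real t * K n j else 0))
     = d - 2 * t * N" by (simp add: Re_mult_real d_def N_def)
  moreover have "d - 2 * t * N < 0"
  proof -
    have "t * N = d + 1" using N unfolding t_def by simp
    then show ?thesis using d by linarith
  qed
  ultimately show False using assms(1) unfolding psd_def by (metis not_le)
qed

lemma H1: "quat_of_real c * (x * (y * quat_of_real d)) = x * (y * quat_of_real (c*d))"
  by (simp add: quat_eq_iff qdefs algebra_simps)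
lemma H2: "quat_of_real c * (x * quat_of_real d) = x * quat_of_real (c*d)"
  by (simp add: quat_eq_iff qdefs algebra_simps)
lemma H3: "a * b * (c * d * quat_of_real t) = a * (b * c * quat_of_real t) * d"
  by (simp add: quat_eq_iff qdefs algebra_simps)

lemma chol:
  "herm n K \<Longrightarrow> psd n K \<Longrightarrow> \<exists>X. \<forall>i<n. \<forall>j<n. K i j = (\<Sum>k<n. qcnj (X i k) * X j k)"
proof (induction n arbitrary: K)
  case 0
  then show ?case by simp
next
  case (Suc n)
  have hK: "\<And>i j. i < Suc n \<Longrightarrow> j < Suc n \<Longrightarrow> K j i = qcnj (K i j)"
    using Suc.prems(1) unfolding herm_def by blast
  have hKn: "K i n = qcnj (K n i)" if "i < n" for i
    using hK[of n i] that by simp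
  define a where "a = Re (K n n)"
  have Knn: "K n n = quat_of_real a" and a0: "0 \<le> a"
    using psd_diag[OF Suc.prems(2,1)] unfolding a_def by auto
  show ?case
  proof (cases "a = 0")
    case True
    have row: "K n j = 0" if "j < n" for j
      using psd_zero_row[OF Suc.prems(2,1) _ that] Knn True by simp
    have col: "K j n = 0" if "j < n" for j
      using hK[of n j] row[OF that] that by simp
    have "psd n K"
      by (rule psd_restrict[OF Suc.prems(2)], rule exI[of _ 0])
         (simp add: qform_split Knn True)
    then obtain X' where X': "\<forall>i<n. \<forall>j<n. K i j = (\<Sum>k<n. qcnj (X' i k) * X' j k)"
      using Suc.IH herm_restrict[OF Suc.prems(1)] by blast
    define X where "X i k = (if i = n \<or> k = n then 0 else X' i k)" for i k
    have "K i j = (\<Sum>k<Suc n. qcnj (X i k) * X j k)" if ij: "i < Suc n" "j < Suc n" for i j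
    proof (cases "i = n \<or> j = n")
      case True
      then show ?thesis using that row col Knn \<open>a = 0\<close> by (auto simp: X_def less_Suc_eq)
    next
      case False
      then have "i < n" "j < n" using that by auto
      then show ?thesis using X' by (simp add: X_def)
    qed
    then show ?thesis by blast
  next
    case False
    then have apos: "a > 0" using a0 by simp
    define r where "r = quat_of_real (1/a)"
    define K' where "K' i j = K i j - K i n * K n j * r" for i j
    have "psd n K'"
    proof (rule psd_restrict[OF Suc.prems(2)])
      fix q
      define b where "b = (\<Sum>j<n. K n j * q j)"
      define b' where "b' = (\<Sum>i<n. qcnj (q i) * K i n)"
      have cb: "qcnj b = b'" unfolding b_def b'_def qcnj_sum
        by (rule sum.cong) (auto simp: qcnj_mult hKn)
      have "b' * r * b = b' * (b * r)" unfolding r_def by (simp add: qr_commute[of "1/a" b] mult.assoc)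
      also have "\<dots> = (\<Sum>i<n. \<Sum>j<n. qcnj (q i) * (K i n * K n j * r) * q j)"
        unfolding b_def b'_def sum_distrib_right sum_product
        by (intro sum.cong refl) (simp add: sum_distrib_left H3 r_def)
      finally have "qform n K' q = qform n K q - b' * r * b"
        unfolding qform_def K'_def
        by (simp add: sum_subtractf algebra_simps)
      moreover have "qform (Suc n) K (q(n := - r * b)) = qform n K q - b' * r * b"
      proof -
        have cr: "qcnj r = r" unfolding r_def by simp
        have rar: "r * quat_of_real a * r = r" unfolding r_def qr_mult using apos by simp
        have "qform (Suc n) K (q(n := - r * b)) = qform n K q - b' * r * b - b' * r * b
            + b' * (r * quat_of_real a * r) * b"
          unfolding qform_split Knn b_def[symmetric] b'_def[symmetric]
          by (simp add: qcnj_mult cb cr algebra_simps mult.assoc)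
        then show ?thesis unfolding rar by simp
      qed
      ultimately show "\<exists>p. Re (qform n K' q) = Re (qform (Suc n) K (q(n := p)))" by metis
    qed
    moreover have "herm n K'"
      unfolding herm_def
    proof (intro allI impI)
      fix i j assume ij: "i < n" "j < n"
      have "qcnj (K' i j) = qcnj (K i j) - r * (qcnj (K n j) * qcnj (K i n))"
        unfolding K'_def by (simp add: qcnj_mult r_def mult.assoc)
      also have "\<dots> = K j i - r * (K j n * K n i)"
        using hK[of i j] hKn[of i] hKn[of j] ij by simp
      also have "\<dots> = K' j i" unfolding K'_def r_def qr_commute[of "1/a" "K j n * K n i"] by (simp add: mult.assoc)
      finally show "K' j i = qcnj (K' i j)" by simp
    qed
    ultimately obtain X' where X': "\<forall>i<n. \<forall>j<n. K' i j = (\<Sum>k<n. qcnj (X' i k) * X' j k)"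
      using Suc.IH by blast
    define s where "s = sqrt a"
    have s: "s * s = a" "s > 0" unfolding s_def using apos by auto
    define X where "X i k = (if i = n then (if k = n then quat_of_real s else 0)
       else if k = n then K n i * quat_of_real (1/s) else X' i k)" for i k
    have "K i j = (\<Sum>k<Suc n. qcnj (X i k) * X j k)" if ij: "i < Suc n" "j < Suc n" for i j
    proof -
      have ss: "quat_of_real (1/s) * quat_of_real (1/s) = r" unfolding r_def qr_mult using s by simp
      have ss2: "quat_of_real s * quat_of_real (1/s) = 1" unfolding qr_mult using s by simp
      have ss3: "quat_of_real (1/s * s) = 1" "quat_of_real (s * (1/s)) = 1" using s by auto
      consider "i < n" "j < n" | "i = n" "j < n" | "i < n" "j = n" | "i = n" "j = n"
        using ij unfolding less_Suc_eq by blast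
      then show ?thesis
      proof cases
        case 1
        then have "(\<Sum>k<Suc n. qcnj (X i k) * X j k) = K' i j + quat_of_real (1/s) * (K i n * (K n j * quat_of_real (1/s)))"
          using X' by (simp add: X_def qcnj_mult hKn mult.assoc)
        also have "\<dots> = K' i j + K i n * K n j * r"
          unfolding H1 r_def using s by (simp add: mult.assoc)
        finally show ?thesis unfolding K'_def by simp
      next
        case 2
        then show ?thesis using s by (simp add: X_def H2 ss3)
      next
        case 3
        then show ?thesis using s by (simp add: X_def qcnj_mult hKn mult.assoc H2 ss3)
      next
        case 4
        then show ?thesis using Knn s by (simp add: X_def qr_mult)
      qed
    qed
    then show ?thesis by blast
  qed
qed

definition rg :: "(nat \<Rightarrow> nat \<Rightarrow> real) \<Rightarrow> bool" where
  "rg W \<longleftrightarrow> (\<exists>(S::nat set) f. finite S \<and> (\<forall>i j. W i j = (\<Sum>s\<in>S. f s i * f s j)))"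

lemma rg_of:
  fixes S :: "'b::countable set"
  assumes "finite S" "\<And>i j. W i j = (\<Sum>s\<in>S. f s i * f s j)"
  shows "rg W"
  unfolding rg_def
proof (intro exI conjI allI)
  show "finite (to_nat ` S)" using assms(1) by simp
  fix i j
  show "W i j = (\<Sum>s\<in>to_nat ` S. f (from_nat s) i * f (from_nat s) j)"
    by (subst sum.reindex) (auto simp: assms(2))
qed

lemma rg_one: "rg (\<lambda>i j. 1)"
  unfolding rg_def by (rule exI[of _ "{0}"], rule exI[of _ "\<lambda>s i. 1"]) simp

lemma rg_mult:
  assumes "rg W" "rg V" shows "rg (\<lambda>i j. W i j * V i j)"
proof -
  from assms(1) obtain S :: "nat set" and f where S1: "finite S" and S2: "\<forall>i j. W i j = (\<Sum>s\<in>S. f s i * f s j)"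
    unfolding rg_def by (elim exE conjE) iprover
  from assms(2) obtain T :: "nat set" and g where T1: "finite T" and T2: "\<forall>i j. V i j = (\<Sum>s\<in>T. g s i * g s j)"
    unfolding rg_def by (elim exE conjE) iprover
  show ?thesis
  proof (rule rg_of[where S="S \<times> T" and f="\<lambda>p i. f (fst p) i * g (snd p) i"])
    show "finite (S \<times> T)" using S1 T1 by simp
    fix i j
    have "W i j * V i j = (\<Sum>s\<in>S. \<Sum>t\<in>T. f s i * g t i * (f s j * g t j))"
      unfolding S2[rule_format] T2[rule_format] sum_product by (simp add: algebra_simps)
    also have "\<dots> = (\<Sum>p\<in>S \<times> T. f (fst p) i * g (snd p) i * (f (fst p) j * g (snd p) j))"
      by (simp add: sum.cartesian_product')
    finally show "W i j * V i j = (\<Sum>p\<in>S \<times> T. f (fst p) i * g (snd p) i * (f (fst p) j * g (snd p) j))" .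
  qed
qed
lemma rg_pow: "rg W \<Longrightarrow> rg (\<lambda>i j. W i j ^ m)"
proof (induction m)
  case 0 then show ?case using rg_one by simp
next
  case (Suc m)
  then show ?case using rg_mult[OF Suc.prems Suc.IH] by (simp add: mult.commute)
qed

definition qcomp :: "nat \<Rightarrow> quat \<Rightarrow> real" where
  "qcomp c q = (if c = 0 then Re q else if c = 1 then Im1 q else if c = 2 then Im2 q else Im3 q)"

lemma Re_cnj_qcomp: "Re (p * qcnj q) = (\<Sum>c<4. qcomp c p * qcomp c q)"
  by (simp add: Re_real_cnj eval_nat_numeral qcomp_def)

lemma qabs_sq: "qabs g ^ 2 = Re (g * qcnj g)"
  by (simp add: qabs_def self_cnj)

lemma rg_abs:
  fixes v :: "nat \<Rightarrow> nat \<Rightarrow> quat"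
  shows "rg (\<lambda>i j. qabs (\<Sum>k<n. qcnj (v i k) * v j k) ^ 2)"
proof (rule rg_of[where S="({..<n} \<times> {..<n}) \<times> {..<4::nat}"
      and f="\<lambda>((l,k),c) i. qcomp c (v i l * qcnj (v i k))"])
  show "finite (({..<n} \<times> {..<n}) \<times> {..<4::nat})" by simp
  fix i j
  have "qabs (\<Sum>k<n. qcnj (v i k) * v j k) ^ 2
     = (\<Sum>k<n. \<Sum>l<n. Re (qcnj (v i k) * v j k * (qcnj (v j l) * v i l)))"
    unfolding qabs_sq qcnj_sum sum_product Re_sum by (simp add: qcnj_mult)
  also have "\<dots> = (\<Sum>k<n. \<Sum>l<n. Re ((v i l * qcnj (v i k)) * qcnj (v j l * qcnj (v j k))))"
  proof (intro sum.cong refl)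
    fix k l
    have "Re (qcnj (v i k) * v j k * (qcnj (v j l) * v i l))
        = Re ((qcnj (v i k) * v j k * qcnj (v j l)) * v i l)" by (simp add: mult.assoc)
    also have "\<dots> = Re (v i l * (qcnj (v i k) * v j k * qcnj (v j l)))" by (rule Re_mult_comm)
    also have "\<dots> = Re ((v i l * qcnj (v i k)) * qcnj (v j l * qcnj (v j k)))"
      by (simp add: qcnj_mult mult.assoc)
    finally show "Re (qcnj (v i k) * v j k * (qcnj (v j l) * v i l))
        = Re ((v i l * qcnj (v i k)) * qcnj (v j l * qcnj (v j k)))" .
  qed
  also have "\<dots> = (\<Sum>l<n. \<Sum>k<n. \<Sum>c<4. qcomp c (v i l * qcnj (v i k)) * qcomp c (v j l * qcnj (v j k)))"
    unfolding Re_cnj_qcomp by (rule sum.swap)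
  also have "\<dots> = (\<Sum>x\<in>({..<n} \<times> {..<n}) \<times> {..<4::nat}.
        (\<lambda>((l,k),c) i. qcomp c (v i l * qcnj (v i k))) x i * (\<lambda>((l,k),c) i. qcomp c (v i l * qcnj (v i k))) x j)"
    by (simp add: sum.cartesian_product' split_def)
  finally show "qabs (\<Sum>k<n. qcnj (v i k) * v j k) ^ 2 = (\<Sum>x\<in>({..<n} \<times> {..<n}) \<times> {..<4::nat}.
        (\<lambda>((l,k),c) i. qcomp c (v i l * qcnj (v i k))) x i * (\<lambda>((l,k),c) i. qcomp c (v i l * qcnj (v i k))) x j)" .
qed

lemma gram_psd:
  fixes u :: "nat \<Rightarrow> 'b \<Rightarrow> quat"
  assumes T: "finite T" and K: "\<And>i j. K i j = (\<Sum>t\<in>T. qcnj (u i t) * u j t)"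
  shows "psd n K" "herm n K"
proof -
  show "herm n K" unfolding herm_def K qcnj_sum by (simp add: qcnj_mult)
  show "psd n K" unfolding psd_def
  proof
    fix q
    define c where "c t = (\<Sum>j<n. u j t * q j)" for t
    have "qform n K q = (\<Sum>t\<in>T. qcnj (c t) * c t)"
    proof -
      have "qform n K q = (\<Sum>i<n. \<Sum>j<n. \<Sum>t\<in>T. qcnj (q i) * qcnj (u i t) * (u j t * q j))"
        unfolding qform_def K sum_distrib_left sum_distrib_right by (simp add: mult.assoc)
      also have "\<dots> = (\<Sum>t\<in>T. \<Sum>i<n. \<Sum>j<n. qcnj (q i) * qcnj (u i t) * (u j t * q j))"
        by (simp add: sum.swap[of _ T])
      also have "\<dots> = (\<Sum>t\<in>T. qcnj (c t) * c t)"
        unfolding c_def qcnj_sum sum_product by (simp add: qcnj_mult)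
      finally show ?thesis .
    qed
    then show "0 \<le> Re (qform n K q)"
      by (simp add: Re_sum sum_nonneg Re_cnj_self_nonneg)
  qed
qed

lemma hs_lemmas:
  fixes smul :: "'v::ab_group_add \<Rightarrow> quat \<Rightarrow> 'v" and ip :: "'v \<Rightarrow> 'v \<Rightarrow> quat"
  assumes H: "right_quat_hilbert_space smul ip"
  shows "\<And>x y. ip y x = qcnj (ip x y)"
    and "\<And>x y z. ip (x + y) z = ip x z + ip y z"
    and "\<And>x a z. ip (smul x a) z = qcnj a * ip x z"
    and "\<And>x y z. ip z (x + y) = ip z x + ip z y"
    and "\<And>x a z. ip z (smul x a) = ip z x * a"
    and "\<And>x. 0 \<le> Re (ip x x)"
proof -
  note D = H[unfolded right_quat_hilbert_space_def]
  have s1a: "\<forall>x. smul x 1 = x" using D by (elim conjE) assumption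
  have sadda: "\<forall>x a b. smul x (a + b) = smul x a + smul x b" using D by (elim conjE) assumption
  have La: "\<forall>x y z a b. ip (smul x a + smul y b) z = qcnj a * ip x z + qcnj b * ip y z"
    using D by (elim conjE) assumption
  have Ra: "\<forall>x y z a b. ip z (smul x a + smul y b) = ip z x * a + ip z y * b"
    using D by (elim conjE) assumption
  have ca: "\<forall>x y. ip y x = qcnj (ip x y)" using D by (elim conjE) assumption
  have pa: "\<forall>x. x \<noteq> 0 \<longrightarrow> Im1 (ip x x) = 0 \<and> Im2 (ip x x) = 0 \<and> Im3 (ip x x) = 0 \<and> Re (ip x x) > 0"
    using D by (elim conjE) assumption
  have s1: "smul x 1 = x" for x using s1a by simp
  have sadd: "smul x (a + b) = smul x a + smul x b" for x a b using sadda by simp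
  have s0: "smul x 0 = 0" for x using sadd[of x 0 0] by simp
  have L: "ip (smul x a + smul y b) z = qcnj a * ip x z + qcnj b * ip y z" for x y z a b
    using La by simp
  have R: "ip z (smul x a + smul y b) = ip z x * a + ip z y * b" for x y z a b
    using Ra by simp
  show c: "ip y x = qcnj (ip x y)" for x y by (rule ca[rule_format])
  show la: "ip (x + y) z = ip x z + ip y z" for x y z using L[of x 1 y 1 z] by (simp add: s1)
  show "ip (smul x a) z = qcnj a * ip x z" for x a z using L[of x a x 0 z] by (simp add: s0)
  show "ip z (x + y) = ip z x + ip z y" for x y z using R[of z x 1 y 1] by (simp add: s1)
  show "ip z (smul x a) = ip z x * a" for x a z using R[of z x a x 0] by (simp add: s0)
  have i0: "ip 0 z = 0" for z using la[of 0 0 z] by simp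
  show "0 \<le> Re (ip x x)" for x
  proof (cases "x = 0")
    case True then show ?thesis by (simp add: i0)
  next
    case False then show ?thesis using pa by (meson less_le)
  qed
qed

lemma ip_sum_left:
  fixes ip :: "'v::ab_group_add \<Rightarrow> 'v \<Rightarrow> quat"
  assumes "\<And>x y z. ip (x + y) z = ip x z + ip y z"
  shows "ip (sum f S) z = (\<Sum>i\<in>S. ip (f i) z)"
proof -
  have i0: "ip 0 z = 0" for z using assms(1)[of 0 0 z] by simp
  show ?thesis by (induction S rule: infinite_finite_induct) (auto simp: i0 assms(1))
qed

lemma ip_sum_right:
  fixes ip :: "'v::ab_group_add \<Rightarrow> 'v \<Rightarrow> quat"
  assumes "\<And>x y z. ip z (x + y) = ip z x + ip z y"
  shows "ip z (sum f S) = (\<Sum>i\<in>S. ip z (f i))"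
proof -
  have i0: "ip z 0 = 0" for z using assms(1)[of z 0 0] by simp
  show ?thesis by (induction S rule: infinite_finite_induct) (auto simp: i0 assms(1))
qed

lemma gram_hs:
  fixes smul :: "'v::ab_group_add \<Rightarrow> quat \<Rightarrow> 'v" and ip :: "'v \<Rightarrow> 'v \<Rightarrow> quat"
  assumes H: "right_quat_hilbert_space smul ip"
  shows "psd n (\<lambda>i j. ip (x i) (x j))" "herm n (\<lambda>i j. ip (x i) (x j))"
proof -
  note hs = hs_lemmas[OF H]
  show "herm n (\<lambda>i j. ip (x i) (x j))" unfolding herm_def using hs(1) by blast
  show "psd n (\<lambda>i j. ip (x i) (x j))" unfolding psd_def
  proof
    fix q
    define y where "y = (\<Sum>i<n. smul (x i) (q i))"
    have "ip y y = (\<Sum>i<n. ip (smul (x i) (q i)) y)"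
      unfolding y_def by (rule ip_sum_left[OF hs(2)])
    also have "\<dots> = (\<Sum>i<n. qcnj (q i) * (\<Sum>j<n. ip (x i) (smul (x j) (q j))))"
      unfolding hs(3) y_def
      by (intro sum.cong refl arg_cong[where f="\<lambda>t. qcnj _ * t"] ip_sum_right) (rule hs(4))
    also have "\<dots> = qform n (\<lambda>i j. ip (x i) (x j)) q"
      unfolding qform_def hs(5) sum_distrib_left by (simp add: mult.assoc)
    finally have "ip y y = qform n (\<lambda>i j. ip (x i) (x j)) q" .
    then show "0 \<le> Re (qform n (\<lambda>i j. ip (x i) (x j)) q)" using hs(6)[of y] by simp
  qed
qed

lemma H4: "qcnj (x * quat_of_real a) * (y * quat_of_real b) = qcnj x * y * quat_of_real (a*b)"
  by (simp add: quat_eq_iff qdefs algebra_simps)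

lemma qabs_one: "qabs 1 = 1"
  by (simp add: qabs_def one_quat_def)

theorem mainTheorem15:
  fixes smul :: "'v::ab_group_add \<Rightarrow> quat \<Rightarrow> 'v"
    and ip :: "'v \<Rightarrow> 'v \<Rightarrow> quat"
    and x :: "nat \<Rightarrow> 'v"
    and n :: nat
  assumes "right_quat_hilbert_space smul ip"
    and "\<forall>i<n. ip (x i) (x i) = 1"
  shows "\<forall>m::nat. \<exists>xm :: nat \<Rightarrow> nat \<Rightarrow> quat.
           (\<forall>i<n. qinner_n n (xm i) (xm i) = 1) \<and>
           (\<forall>i<n. \<forall>j<n. qinner_n n (xm i) (xm j) =
               ip (x i) (x j) * quat_of_real (qabs (ip (x i) (x j)) ^ (2 * m)))"
proof
  fix m :: nat
  have "\<exists>v. \<forall>i<n. \<forall>j<n. ip (x i) (x j) = (\<Sum>k<n. qcnj (v i k) * v j k)"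
    by (rule chol[OF gram_hs(2,1)[OF assms(1)]])
  then obtain v where v: "\<forall>i<n. \<forall>j<n. ip (x i) (x j) = (\<Sum>k<n. qcnj (v i k) * v j k)"
    by (elim exE)
  define G where "G i j = (\<Sum>k<n. qcnj (v i k) * v j k)" for i j
  have "rg (\<lambda>i j. (qabs (G i j) ^ 2) ^ m)"
    unfolding G_def by (rule rg_pow[OF rg_abs])
  then obtain S :: "nat set" and f where S1: "finite S"
    and S2: "\<forall>i j. (qabs (G i j) ^ 2) ^ m = (\<Sum>s\<in>S. f s i * f s j)"
    unfolding rg_def by (elim exE conjE) iprover
  define K where "K i j = G i j * quat_of_real ((qabs (G i j) ^ 2) ^ m)" for i j
  define u where "u i p = v i (snd p) * quat_of_real (f (fst p) i)" for i p
  have Ku: "K i j = (\<Sum>p\<in>S \<times> {..<n}. qcnj (u i p) * u j p)" for i j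
  proof -
    have "K i j = G i j * (\<Sum>s\<in>S. quat_of_real (f s i * f s j))"
      unfolding K_def S2[rule_format] qr_sum ..
    also have "\<dots> = (\<Sum>s\<in>S. \<Sum>k<n. qcnj (v i k) * v j k * quat_of_real (f s i * f s j))"
      unfolding G_def sum_distrib_left sum_distrib_right ..
    also have "\<dots> = (\<Sum>p\<in>S \<times> {..<n}. qcnj (u i p) * u j p)"
      unfolding sum.cartesian_product' u_def H4 by simp
    finally show ?thesis .
  qed
  have fin: "finite (S \<times> {..<n})" using S1 by simp
  have "\<exists>X. \<forall>i<n. \<forall>j<n. K i j = (\<Sum>k<n. qcnj (X i k) * X j k)"
    by (rule chol[OF gram_psd(2,1)[OF fin Ku]])
  then obtain X where X: "\<forall>i<n. \<forall>j<n. K i j = (\<Sum>k<n. qcnj (X i k) * X j k)"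
    by (elim exE)
  have main: "qinner_n n (X i) (X j) = ip (x i) (x j) * quat_of_real (qabs (ip (x i) (x j)) ^ (2 * m))"
    if "i < n" "j < n" for i j
  proof -
    have "qinner_n n (X i) (X j) = K i j" using X that unfolding qinner_n_def by simp
    also have "\<dots> = ip (x i) (x j) * quat_of_real (qabs (ip (x i) (x j)) ^ (2 * m))"
      unfolding K_def G_def v[rule_format, OF that] by (simp add: power_mult)
    finally show ?thesis .
  qed
  show "\<exists>xm :: nat \<Rightarrow> nat \<Rightarrow> quat.
           (\<forall>i<n. qinner_n n (xm i) (xm i) = 1) \<and>
           (\<forall>i<n. \<forall>j<n. qinner_n n (xm i) (xm j) =
               ip (x i) (x j) * quat_of_real (qabs (ip (x i) (x j)) ^ (2 * m)))"
  proof (intro exI[of _ X] conjI allI impI)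
    fix i assume i: "i < n"
    show "qinner_n n (X i) (X i) = 1"
      unfolding main[OF i i] using assms(2) i by (simp add: qabs_one)
  next
    fix i j assume "i < n" "j < n"
    then show "qinner_n n (X i) (X j) = ip (x i) (x j) * quat_of_real (qabs (ip (x i) (x j)) ^ (2 * m))"
      by (rule main)
  qed
qed

end
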